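(* Let $\Gamma$ be a non-elementary hyperbolic group with finite generating set $S$, and let $(\gamma_n)$ be a sequence of distinct elements of $\Gamma$. There is $h\in\Gamma$ such that the sequence $(l_S([\gamma_n,h]))_n$ is unbounded.
   Context: $[g,h]=ghg^{-1}h^{-1}$; $l_S$ is the translation length on the Cayley graph $C_S(\Gamma)$. Non-elementary: contains a free subgroup of rank 2. *)

theory Defs
  imports "HOL-Algebra.Algebra"
begin

definition sym_gens :: "('a, 'b) monoid_scheme \<Rightarrow> 'a set \<Rightarrow> 'a set" where
  "sym_gens G S = S \<union> (\<lambda>s. inv\<^bsub>G\<^esub> s) ` S"

definition word_eval :: "('a, 'b) monoid_scheme \<Rightarrow> 'a list \<Rightarrow> 'a" where
  "word_eval G ws = foldr (\<lambda>x y. x \<otimes>\<^bsub>G\<^esub> y) ws \<one>\<^bsub>G\<^esub>"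

definition word_length :: "('a, 'b) monoid_scheme \<Rightarrow> 'a set \<Rightarrow> 'a \<Rightarrow> nat" where
  "word_length G S g =
     (LEAST n. \<exists>ws. length ws = n \<and> set ws \<subseteq> sym_gens G S \<and> word_eval G ws = g)"

text \<open>Word metric d_S(x,y) = |x^{-1} y|_S (graph metric of the Cayley graph on vertices).\<close>
definition word_dist :: "('a, 'b) monoid_scheme \<Rightarrow> 'a set \<Rightarrow> 'a \<Rightarrow> 'a \<Rightarrow> nat" where
  "word_dist G S x y = word_length G S (inv\<^bsub>G\<^esub> x \<otimes>\<^bsub>G\<^esub> y)"

definition gromov_product :: "('a, 'b) monoid_scheme \<Rightarrow> 'a set \<Rightarrow> 'a \<Rightarrow> 'a \<Rightarrow> 'a \<Rightarrow> real" where
  "gromov_product G S w x y =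
     (real (word_dist G S w x) + real (word_dist G S w y) - real (word_dist G S x y)) / 2"

text \<open>Gromov hyperbolicity of the Cayley graph (four-point condition on vertices).\<close>
definition hyperbolic_group :: "('a, 'b) monoid_scheme \<Rightarrow> 'a set \<Rightarrow> bool" where
  "hyperbolic_group G S \<longleftrightarrow> (\<exists>\<delta>::real. \<delta> \<ge> 0 \<and>
     (\<forall>w\<in>carrier G. \<forall>x\<in>carrier G. \<forall>y\<in>carrier G. \<forall>z\<in>carrier G.
        gromov_product G S w x y \<ge> min (gromov_product G S w x z) (gromov_product G S w y z) - \<delta>))"

definition transl_length :: "('a, 'b) monoid_scheme \<Rightarrow> 'a set \<Rightarrow> 'a \<Rightarrow> nat" where
  "transl_length G S g = (LEAST n. \<exists>x\<in>carrier G. word_dist G S x (g \<otimes>\<^bsub>G\<^esub> x) = n)"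

definition commutator :: "('a, 'b) monoid_scheme \<Rightarrow> 'a \<Rightarrow> 'a \<Rightarrow> 'a" where
  "commutator G g h = g \<otimes>\<^bsub>G\<^esub> h \<otimes>\<^bsub>G\<^esub> inv\<^bsub>G\<^esub> g \<otimes>\<^bsub>G\<^esub> inv\<^bsub>G\<^esub> h"

text \<open>Letters: (False,e) is a^{\<plusminus>1}, (True,e) is b^{\<plusminus>1}; e = True means inverse.\<close>
fun letter_eval :: "('a, 'b) monoid_scheme \<Rightarrow> 'a \<Rightarrow> 'a \<Rightarrow> bool \<times> bool \<Rightarrow> 'a" where
  "letter_eval G a b (gen, e) = (let x = (if gen then b else a) in if e then inv\<^bsub>G\<^esub> x else x)"

fun reduced_word :: "(bool \<times> bool) list \<Rightarrow> bool" where
  "reduced_word (l1 # l2 # ls) = (\<not> (fst l1 = fst l2 \<and> snd l1 \<noteq> snd l2) \<and> reduced_word (l2 # ls))"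
| "reduced_word _ = True"

definition free_pair :: "('a, 'b) monoid_scheme \<Rightarrow> 'a \<Rightarrow> 'a \<Rightarrow> bool" where
  "free_pair G a b \<longleftrightarrow> a \<in> carrier G \<and> b \<in> carrier G \<and>
     (\<forall>w. w \<noteq> [] \<and> reduced_word w \<longrightarrow> word_eval G (map (letter_eval G a b) w) \<noteq> \<one>\<^bsub>G\<^esub>)"

definition non_elementary :: "('a, 'b) monoid_scheme \<Rightarrow> bool" where
  "non_elementary G \<longleftrightarrow> (\<exists>a b. free_pair G a b)"

end

theory Submission
  imports Defs
begin


locale wgroup = group G for G :: "('a,'b) monoid_scheme" (structure) +
  fixes S :: "'a set"
  assumes finS: "finite S" and SG: "S \<subseteq> carrier G" and gen: "generate G S = carrier G"
begin

abbreviation "len \<equiv> word_length G S"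
abbreviation "dst \<equiv> word_dist G S"
abbreviation "SG2 \<equiv> sym_gens G S"

lemma sym_carrier: "SG2 \<subseteq> carrier G"
  using SG by (auto simp: sym_gens_def)

lemma sym_finite: "finite SG2"
  using finS by (simp add: sym_gens_def)

lemma sym_inv: "x \<in> SG2 \<Longrightarrow> inv x \<in> SG2"
  using SG by (auto simp: sym_gens_def)

lemma eval_carrier: "set ws \<subseteq> carrier G \<Longrightarrow> word_eval G ws \<in> carrier G"
  by (induction ws) (auto simp: word_eval_def)

lemma eval_append: "set xs \<subseteq> carrier G \<Longrightarrow> set ys \<subseteq> carrier G \<Longrightarrow>
   word_eval G (xs @ ys) = word_eval G xs \<otimes> word_eval G ys"
proof (induction xs)
  case Nil then show ?case using eval_carrier[of ys] by (simp add: word_eval_def)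
next
  case (Cons x xs)
  then show ?case using eval_carrier[of ys] eval_carrier[of xs]
    by (simp add: word_eval_def m_assoc)
qed

lemma eval_Cons: "word_eval G (x # xs) = x \<otimes> word_eval G xs"
  by (simp add: word_eval_def)

lemma eval_Nil: "word_eval G [] = \<one>"
  by (simp add: word_eval_def)

lemma word_exists: "g \<in> carrier G \<Longrightarrow> \<exists>ws. set ws \<subseteq> SG2 \<and> word_eval G ws = g"
proof -
  assume "g \<in> carrier G"
  then have "g \<in> generate G S" using gen by simp
  then show ?thesis
  proof (induction rule: generate.induct)
    case one then show ?case by (intro exI[of _ "[]"]) (simp add: eval_Nil)
  next
    case (incl h) then show ?case
      using SG by (intro exI[of _ "[h]"]) (auto simp: eval_Cons eval_Nil sym_gens_def)
  next
    case (inv h) then show ?case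
      using SG by (intro exI[of _ "[inv h]"]) (auto simp: eval_Cons eval_Nil sym_gens_def)
  next
    case (eng h1 h2)
    then obtain w1 w2 where "set w1 \<subseteq> SG2" "word_eval G w1 = h1" "set w2 \<subseteq> SG2" "word_eval G w2 = h2"
      by blast
    then show ?case using sym_carrier
      by (intro exI[of _ "w1 @ w2"]) (auto simp: eval_append)
  qed
qed

lemma len_witness: "g \<in> carrier G \<Longrightarrow> \<exists>ws. length ws = len g \<and> set ws \<subseteq> SG2 \<and> word_eval G ws = g"
proof -
  assume "g \<in> carrier G"
  then have "\<exists>n ws. length ws = n \<and> set ws \<subseteq> SG2 \<and> word_eval G ws = g"
    using word_exists[of g] by blast
  then show ?thesis unfolding word_length_def by (rule LeastI_ex)
qed

lemma len_le: "set ws \<subseteq> SG2 \<Longrightarrow> len (word_eval G ws) \<le> length ws"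
  unfolding word_length_def by (rule Least_le) blast

lemma len_mult: "x \<in> carrier G \<Longrightarrow> y \<in> carrier G \<Longrightarrow> len (x \<otimes> y) \<le> len x + len y"
proof -
  assume x: "x \<in> carrier G" and y: "y \<in> carrier G"
  obtain w1 where w1: "length w1 = len x" "set w1 \<subseteq> SG2" "word_eval G w1 = x" using len_witness[OF x] by blast
  obtain w2 where w2: "length w2 = len y" "set w2 \<subseteq> SG2" "word_eval G w2 = y" using len_witness[OF y] by blast
  have "x \<otimes> y = word_eval G (w1 @ w2)" using w1 w2 sym_carrier by (simp add: eval_append)
  moreover have "len (word_eval G (w1 @ w2)) \<le> length (w1 @ w2)" using w1 w2 by (intro len_le) auto
  ultimately show ?thesis using w1 w2 by simp
qed

lemma eval_inv_word: "set ws \<subseteq> carrier G \<Longrightarrow> word_eval G (map (\<lambda>x. inv x) (rev ws)) = inv (word_eval G ws)"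
proof (induction ws)
  case Nil then show ?case by (simp add: eval_Nil)
next
  case (Cons x xs)
  then have "word_eval G (map (\<lambda>x. inv x) (rev (x # xs))) = word_eval G (map (\<lambda>x. inv x) (rev xs)) \<otimes> word_eval G [inv x]"
    by (subst eval_append[symmetric]) auto
  also have "\<dots> = inv (word_eval G xs) \<otimes> inv x" using Cons by (simp add: eval_Cons eval_Nil)
  also have "\<dots> = inv (x \<otimes> word_eval G xs)" using Cons eval_carrier[of xs] by (simp add: inv_mult_group)
  finally show ?case by (simp add: eval_Cons)
qed

lemma len_inv_le: "x \<in> carrier G \<Longrightarrow> len (inv x) \<le> len x"
proof -
  assume x: "x \<in> carrier G"
  obtain w1 where w1: "length w1 = len x" "set w1 \<subseteq> SG2" "word_eval G w1 = x" using len_witness[OF x] by blast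
  have "inv x = word_eval G (map (\<lambda>x. inv x) (rev w1))" using w1 sym_carrier eval_inv_word[of w1] by auto
  moreover have "len (word_eval G (map (\<lambda>x. inv x) (rev w1))) \<le> length (map (\<lambda>x. inv x) (rev w1))"
    using w1 sym_inv by (intro len_le) auto
  ultimately show ?thesis using w1 by simp
qed

lemma len_inv: "x \<in> carrier G \<Longrightarrow> len (inv x) = len x"
  using len_inv_le[of x] len_inv_le[of "inv x"] by simp

lemma len_one: "len \<one> = 0"
  using len_le[of "[]"] by (simp add: eval_Nil)

lemma len_zero: "x \<in> carrier G \<Longrightarrow> len x = 0 \<Longrightarrow> x = \<one>"
  using len_witness[of x] by (auto simp: eval_Nil)

lemma geo_point: assumes g: "g \<in> carrier G" and k: "k \<le> len g"
  shows "\<exists>p\<in>carrier G. len p = k \<and> len (inv p \<otimes> g) = len g - k"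
proof -
  obtain w where w: "length w = len g" "set w \<subseteq> SG2" "word_eval G w = g" using len_witness[OF g] by blast
  define p where "p = word_eval G (take k w)"
  define q where "q = word_eval G (drop k w)"
  have st: "set (take k w) \<subseteq> SG2" "set (drop k w) \<subseteq> SG2" using w(2) set_take_subset set_drop_subset by fastforce+
  have pc: "p \<in> carrier G" "q \<in> carrier G" using st sym_carrier eval_carrier unfolding p_def q_def by blast+
  have "g = p \<otimes> q" unfolding p_def q_def using w st sym_carrier
    by (metis append_take_drop_id eval_append order_trans)
  then have iq: "inv p \<otimes> g = q" using pc by (simp add: m_assoc[symmetric])
  have lp: "len p \<le> k" using len_le[OF st(1)] w k unfolding p_def by simp
  have lq: "len q \<le> len g - k" using len_le[OF st(2)] w k unfolding q_def by simp
  have "len g \<le> len p + len q" using len_mult[OF pc] \<open>g = p \<otimes> q\<close> by simp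
  then show ?thesis using lp lq iq pc k by (intro bexI[of _ p]) auto
qed

lemma ball_finite: "finite {g \<in> carrier G. len g \<le> n}"
proof -
  have "{g \<in> carrier G. len g \<le> n} \<subseteq> word_eval G ` {ws. set ws \<subseteq> SG2 \<and> length ws \<le> n}"
  proof
    fix g assume "g \<in> {g \<in> carrier G. len g \<le> n}"
    then show "g \<in> word_eval G ` {ws. set ws \<subseteq> SG2 \<and> length ws \<le> n}"
      using len_witness[of g] by force
  qed
  then show ?thesis using finite_lists_length_le[OF sym_finite] finite_subset by blast
qed

end


context wgroup
begin

abbreviation "gp \<equiv> gromov_product G S"

lemma dst_def': "dst x y = len (inv x \<otimes> y)" by (simp add: word_dist_def)

lemma dst_sym: "x \<in> carrier G \<Longrightarrow> y \<in> carrier G \<Longrightarrow> dst x y = dst y x"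
proof -
  assume x: "x \<in> carrier G" and y: "y \<in> carrier G"
  have "inv (inv x \<otimes> y) = inv y \<otimes> x" using x y by (simp add: inv_mult_group)
  then show ?thesis using len_inv[of "inv x \<otimes> y"] x y by (simp add: word_dist_def)
qed

lemma dst_tri: "x \<in> carrier G \<Longrightarrow> y \<in> carrier G \<Longrightarrow> z \<in> carrier G \<Longrightarrow> dst x z \<le> dst x y + dst y z"
proof -
  assume x: "x \<in> carrier G" and y: "y \<in> carrier G" and z: "z \<in> carrier G"
  have "y \<otimes> (inv y \<otimes> z) = z" using y z by (simp add: m_assoc[symmetric] r_inv)
  then have "inv x \<otimes> z = (inv x \<otimes> y) \<otimes> (inv y \<otimes> z)" using x y z
    by (simp add: m_assoc)
  then show ?thesis using len_mult[of "inv x \<otimes> y" "inv y \<otimes> z"] x y z by (simp add: word_dist_def)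
qed

lemma dst_trans: "w \<in> carrier G \<Longrightarrow> x \<in> carrier G \<Longrightarrow> y \<in> carrier G \<Longrightarrow> dst (w \<otimes> x) (w \<otimes> y) = dst x y"
proof -
  assume w: "w \<in> carrier G" and x: "x \<in> carrier G" and y: "y \<in> carrier G"
  have "inv (w \<otimes> x) \<otimes> (w \<otimes> y) = inv x \<otimes> y" using w x y
    by (simp add: inv_mult_group m_assoc[symmetric]) (simp add: m_assoc)
  then show ?thesis by (simp add: word_dist_def)
qed

lemma dst_one: "x \<in> carrier G \<Longrightarrow> dst \<one> x = len x" by (simp add: word_dist_def)

lemma dst_self: "x \<in> carrier G \<Longrightarrow> dst x x = 0" by (simp add: word_dist_def len_one)

lemma gp_trans: "w \<in> carrier G \<Longrightarrow> a \<in> carrier G \<Longrightarrow> x \<in> carrier G \<Longrightarrow> y \<in> carrier G \<Longrightarrow>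
   gp (w \<otimes> a) (w \<otimes> x) (w \<otimes> y) = gp a x y"
  by (simp add: gromov_product_def dst_trans)

lemma gp_sym: "x \<in> carrier G \<Longrightarrow> y \<in> carrier G \<Longrightarrow> gp w x y = gp w y x"
  by (simp add: gromov_product_def dst_sym add.commute)

lemma gp_one: "x \<in> carrier G \<Longrightarrow> y \<in> carrier G \<Longrightarrow> gp \<one> x y = (real (len x) + real (len y) - real (dst x y)) / 2"
  by (simp add: gromov_product_def dst_one)

lemma pow_disp: assumes f: "f \<in> carrier G" and y: "y \<in> carrier G"
  shows "dst y (f [^] k \<otimes> y) \<le> k * dst y (f \<otimes> y)"
proof (induction k)
  case 0 then show ?case using y by (simp add: dst_self)
next
  case (Suc k)
  have e: "f [^] Suc k \<otimes> y = f [^] k \<otimes> (f \<otimes> y)" using f y by (simp add: m_assoc)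
  have "dst y (f [^] Suc k \<otimes> y) \<le> dst y (f [^] k \<otimes> y) + dst (f [^] k \<otimes> y) (f [^] k \<otimes> (f \<otimes> y))"
    unfolding e using f y by (intro dst_tri) auto
  also have "dst (f [^] k \<otimes> y) (f [^] k \<otimes> (f \<otimes> y)) = dst y (f \<otimes> y)"
    using f y by (intro dst_trans) auto
  finally show ?case using Suc by simp
qed

lemma transl_lower:
  fixes L :: real
  assumes f: "f \<in> carrier G" and big: "\<And>k. real (dst \<one> (f [^] k)) \<ge> real k * L"
  shows "real (transl_length G S f) \<ge> L - 1"
proof -
  have "\<exists>n. \<exists>x\<in>carrier G. dst x (f \<otimes> x) = n" by blast
  then have "\<exists>x\<in>carrier G. dst x (f \<otimes> x) = transl_length G S f"
    unfolding transl_length_def by (rule LeastI_ex)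
  then obtain y where y: "y \<in> carrier G" and yd: "dst y (f \<otimes> y) = transl_length G S f" by blast
  define k where "k = 2 * len y + 1"
  have fk: "f [^] k \<in> carrier G" using f by simp
  have "dst \<one> (f [^] k) \<le> dst \<one> y + dst y (f [^] k)" using y fk by (intro dst_tri) auto
  also have "dst y (f [^] k) \<le> dst y (f [^] k \<otimes> y) + dst (f [^] k \<otimes> y) (f [^] k)"
    using y fk by (intro dst_tri) auto
  also have "dst (f [^] k \<otimes> y) (f [^] k) = dst y \<one>"
    using dst_trans[OF fk y one_closed] fk by simp
  also have "dst y \<one> = len y" using dst_sym[OF y one_closed] by (simp add: dst_one y)
  finally have "dst \<one> (f [^] k) \<le> 2 * len y + dst y (f [^] k \<otimes> y)" by (simp add: dst_one y)
  also have "dst y (f [^] k \<otimes> y) \<le> k * dst y (f \<otimes> y)" by (rule pow_disp[OF f y])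
  finally have N: "dst \<one> (f [^] k) \<le> 2 * len y + k * transl_length G S f" using yd by simp
  then have "real (dst \<one> (f [^] k)) \<le> real (2 * len y + k * transl_length G S f)" by (simp only: of_nat_le_iff)
  then have "real k * L \<le> 2 * real (len y) + real k * real (transl_length G S f)" using big[of k] by simp
  moreover have "2 * real (len y) < real k" unfolding k_def by simp
  ultimately have "real k * L < real k * (1 + real (transl_length G S f))" by (simp add: algebra_simps)
  moreover have kp: "real k > 0" unfolding k_def by simp
  ultimately have "L < 1 + real (transl_length G S f)" using mult_less_cancel_left_pos[OF kp] by blast
  then show ?thesis by simp
qed

end

locale hgroup = wgroup +
  fixes \<delta> :: real
  assumes dpos: "\<delta> \<ge> 0"
    and four: "\<And>w x y z. w \<in> carrier G \<Longrightarrow> x \<in> carrier G \<Longrightarrow> y \<in> carrier G \<Longrightarrow> z \<in> carrier G \<Longrightarrow>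
        gromov_product G S w x y \<ge> min (gromov_product G S w x z) (gromov_product G S w y z) - \<delta>"
begin

lemma chain:
  fixes x :: "nat \<Rightarrow> 'a" and K :: real
  assumes xc: "\<And>i. x i \<in> carrier G" and K: "K \<ge> 0"
    and corner: "\<And>i. 1 \<le> i \<Longrightarrow> gp (x i) (x (i-1)) (x (Suc i)) \<le> K"
    and seg: "\<And>i. real (dst (x i) (x (Suc i))) > 2*K + 2*\<delta>"
  shows "1 \<le> m \<Longrightarrow> gp (x (m-1)) (x 0) (x m) \<le> K + \<delta> \<and>
     real (dst (x 0) (x m)) \<ge> (\<Sum>i<m. real (dst (x i) (x (Suc i))) - 2*K - 2*\<delta>)"
proof (induction m)
  case 0 then show ?case by simp
next
  case (Suc m)
  show ?case
  proof (cases "m = 0")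
    case True
    then show ?thesis using K dpos xc[of 0] dst_self[of "x 0"]
      by (simp add: gromov_product_def)
  next
    case False
    then have IH: "gp (x (m-1)) (x 0) (x m) \<le> K + \<delta>"
       "real (dst (x 0) (x m)) \<ge> (\<Sum>i<m. real (dst (x i) (x (Suc i))) - 2*K - 2*\<delta>)"
      using Suc by auto
    define a where "a = x (m-1)"
    define b where "b = x m"
    define c where "c = x (Suc m)"
    define z0 where "z0 = x 0"
    have abc: "a \<in> carrier G" "b \<in> carrier G" "c \<in> carrier G" "z0 \<in> carrier G"
      unfolding a_def b_def c_def z0_def using xc by auto
    have cor: "gp b a c \<le> K" unfolding a_def b_def c_def using corner[of m] False by simp
    have sg: "real (dst a b) > 2*K + 2*\<delta>" unfolding a_def b_def using seg[of "m-1"] False by simp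
    have f4: "gp b a c \<ge> min (gp b a z0) (gp b c z0) - \<delta>" using four abc by blast
    have s1: "dst a b = dst b a" "dst a z0 = dst z0 a" "dst b z0 = dst z0 b" "dst c z0 = dst z0 c" "dst b c = dst c b"
      using abc dst_sym by auto
    have "gp b a z0 > K + \<delta>" using IH(1) sg s1 unfolding a_def[symmetric] b_def[symmetric] z0_def[symmetric]
      by (simp add: gromov_product_def)
    then have "gp b c z0 \<le> K + \<delta>" using f4 cor by linarith
    then have g1: "gp b z0 c \<le> K + \<delta>" using gp_sym abc by simp
    then have d1: "real (dst z0 c) \<ge> real (dst z0 b) + real (dst b c) - 2*K - 2*\<delta>"
      using s1 by (simp add: gromov_product_def)
    have "m - 1 = m - 1" ..
    show ?thesis
    proof
      show "gp (x (Suc m - 1)) (x 0) (x (Suc m)) \<le> K + \<delta>"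
        using g1 unfolding b_def z0_def c_def by simp
      show "real (dst (x 0) (x (Suc m))) \<ge> (\<Sum>i<Suc m. real (dst (x i) (x (Suc i))) - 2*K - 2*\<delta>)"
        using d1 IH(2) unfolding b_def z0_def c_def by simp
    qed
  qed
qed

end


primrec cpath :: "('a, 'b) monoid_scheme \<Rightarrow> (nat \<Rightarrow> 'a) \<Rightarrow> nat \<Rightarrow> 'a" where
  "cpath G c 0 = \<one>\<^bsub>G\<^esub>"
| "cpath G c (Suc i) = cpath G c i \<otimes>\<^bsub>G\<^esub> c i"

context hgroup
begin

lemma comm_lower:
  fixes K :: real
  assumes g: "g \<in> carrier G" and h: "h \<in> carrier G" and K: "K \<ge> 0"
    and c1: "gp \<one> (inv g) h \<le> K" and c2: "gp \<one> (inv h) (inv g) \<le> K"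
    and c3: "gp \<one> g (inv h) \<le> K" and c4: "gp \<one> h g \<le> K"
    and lg: "real (len g) > 2*K + 2*\<delta>" and lh: "real (len h) > 2*K + 2*\<delta>"
  shows "real (transl_length G S (commutator G g h)) \<ge> 2 * real (len g) - 8*K - 8*\<delta> - 1"
proof -
  define f where "f = commutator G g h"
  have fc: "f \<in> carrier G" unfolding f_def commutator_def using g h by simp
  define c where "c i = (if i mod 4 = 0 then g else if i mod 4 = 1 then h else if i mod 4 = 2 then inv g else inv h)" for i :: nat
  define x where "x = cpath G c"
  have cc: "c i \<in> carrier G" for i unfolding c_def using g h by simp
  have xc: "x i \<in> carrier G" for i unfolding x_def by (induction i) (auto simp: cc)
  have xs: "x (Suc i) = x i \<otimes> c i" for i unfolding x_def by simp
  have c0: "c (4*k) = g" for k unfolding c_def by (simp add: mod_Suc)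
  have c1': "c (Suc (4*k)) = h" for k unfolding c_def by (simp add: mod_Suc)
  have c2': "c (Suc (Suc (4*k))) = inv g" for k unfolding c_def by (simp add: mod_Suc)
  have c3': "c (Suc (Suc (Suc (4*k)))) = inv h" for k unfolding c_def by (simp add: mod_Suc)
  have seglen: "dst (x i) (x (Suc i)) = len (c i)" for i
  proof -
    have "dst (x i \<otimes> \<one>) (x i \<otimes> c i) = dst \<one> (c i)" using xc cc by (intro dst_trans) auto
    then show ?thesis using xc cc xs dst_one by simp
  qed
  have clen: "real (len (c i)) > 2*K + 2*\<delta>" for i
    unfolding c_def using lg lh len_inv g h by auto
  have corner: "gp (x i) (x (i-1)) (x (Suc i)) \<le> K" if i1: "1 \<le> i" for i
  proof -
    obtain j where j: "i = Suc j" using i1 by (cases i) auto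
    have xi: "x i = x j \<otimes> c j" using j xs by simp
    have e1: "x (i - 1) = x i \<otimes> inv (c j)"
    proof -
      have "x i \<otimes> inv (c j) = x j \<otimes> (c j \<otimes> inv (c j))" unfolding xi using xc cc by (simp add: m_assoc)
      also have "\<dots> = x j" using xc cc by simp
      finally show ?thesis using j by simp
    qed
    have "gp (x i) (x i \<otimes> inv (c j)) (x i \<otimes> c i) = gp \<one> (inv (c j)) (c i)"
      using gp_trans[of "x i" "\<one>" "inv (c j)" "c i"] xc cc by simp
    then have e: "gp (x i) (x (i-1)) (x (Suc i)) = gp \<one> (inv (c j)) (c i)"
      unfolding e1 xs .
    have m: "Suc j mod 4 = (if j mod 4 = 3 then 0 else Suc (j mod 4))" by (simp add: mod_Suc)
    have "j mod 4 = 0 \<or> j mod 4 = 1 \<or> j mod 4 = 2 \<or> j mod 4 = 3" by auto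
    then have "gp \<one> (inv (c j)) (c i) \<le> K"
    proof (elim disjE)
      assume a: "j mod 4 = 0"
      then have "c j = g" "c i = h" unfolding c_def j using m by auto
      then show ?thesis using c1 by simp
    next
      assume a: "j mod 4 = 1"
      then have "c j = h" "c i = inv g" unfolding c_def j using m by auto
      then show ?thesis using c2 by simp
    next
      assume a: "j mod 4 = 2"
      then have "c j = inv g" "c i = inv h" unfolding c_def j using m by auto
      then show ?thesis using c3 g by simp
    next
      assume a: "j mod 4 = 3"
      then have "c j = inv h" "c i = g" unfolding c_def j using m by auto
      then show ?thesis using c4 h by simp
    qed
    then show ?thesis using e by simp
  qed
  have sumeq: "(\<Sum>i<4*k. real (dst (x i) (x (Suc i))) - 2*K - 2*\<delta>)
      = real k * (2 * real (len g) + 2 * real (len h) - 8*K - 8*\<delta>)" for k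
  proof (induction k)
    case 0 then show ?case by simp
  next
    case (Suc k)
    have e4: "4 * Suc k = Suc (Suc (Suc (Suc (4*k))))" by simp
    have "(\<Sum>i<4 * Suc k. real (dst (x i) (x (Suc i))) - 2*K - 2*\<delta>) =
       (\<Sum>i<4*k. real (dst (x i) (x (Suc i))) - 2*K - 2*\<delta>) + (real (len g) - 2*K - 2*\<delta>)
       + (real (len h) - 2*K - 2*\<delta>) + (real (len (inv g)) - 2*K - 2*\<delta>) + (real (len (inv h)) - 2*K - 2*\<delta>)"
      unfolding e4 sum.lessThan_Suc seglen c0 c1' c2' c3' by simp
    then show ?case using Suc len_inv g h by (simp add: algebra_simps)
  qed
  have xpow: "x (4*k) = f [^] k" for k
  proof (induction k)
    case 0 then show ?case unfolding x_def by simp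
  next
    case (Suc k)
    have e4: "4 * Suc k = Suc (Suc (Suc (Suc (4*k))))" by simp
    have "x (4 * Suc k) = x (4*k) \<otimes> g \<otimes> h \<otimes> inv g \<otimes> inv h"
      unfolding e4 xs c0 c1' c2' c3' by (rule refl)
    then show ?case using Suc g h unfolding f_def commutator_def by (simp add: m_assoc)
  qed
  have big: "real (dst \<one> (f [^] k)) \<ge> real k * (2 * real (len g) - 8*K - 8*\<delta>)" for k
  proof (cases "k = 0")
    case True then show ?thesis using dst_self[of \<one>] by simp
  next
    case False
    then have "1 \<le> 4*k" by simp
    then have "real (dst (x 0) (x (4*k))) \<ge> (\<Sum>i<4*k. real (dst (x i) (x (Suc i))) - 2*K - 2*\<delta>)"
      using chain[of x K, OF xc K corner] seglen clen by simp
    then have "real (dst \<one> (f [^] k)) \<ge> real k * (2 * real (len g) + 2 * real (len h) - 8*K - 8*\<delta>)"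
      using sumeq xpow unfolding x_def by simp
    moreover have "real k * (2 * real (len g) + 2 * real (len h) - 8*K - 8*\<delta>) \<ge> real k * (2 * real (len g) - 8*K - 8*\<delta>)"
      by (intro mult_left_mono) auto
    ultimately show ?thesis by linarith
  qed
  show ?thesis using transl_lower[OF fc big] unfolding f_def by simp
qed

end


lemma red_const: "reduced_word (map (\<lambda>l. (l, e)) ys)"
proof (induction ys)
  case Nil then show ?case by simp
next
  case (Cons y ys) then show ?case by (cases ys) auto
qed

lemma red_mix: "(xs \<noteq> [] \<longrightarrow> ys \<noteq> [] \<longrightarrow> last xs \<noteq> hd ys) \<Longrightarrow>
  reduced_word (map (\<lambda>l. (l, True)) xs @ map (\<lambda>l. (l, False)) ys)"
proof (induction xs)
  case Nil then show ?case using red_const by simp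
next
  case (Cons x xs)
  show ?case
  proof (cases xs)
    case Nil
    then show ?thesis
    proof (cases ys)
      case Nil then show ?thesis using \<open>xs = []\<close> by simp
    next
      case (Cons y ys')
      then have "x \<noteq> y" using Cons.prems \<open>xs = []\<close> by simp
      then show ?thesis using \<open>xs = []\<close> Cons red_const[of False "y # ys'"] by simp
    qed
  next
    case (Cons x2 xs')
    then have "reduced_word (map (\<lambda>l. (l, True)) xs @ map (\<lambda>l. (l, False)) ys)"
      using Cons.IH Cons.prems by simp
    then show ?thesis using Cons by simp
  qed
qed

context wgroup
begin

abbreviation "beta r \<equiv> card {g \<in> carrier G. len g \<le> r}"

lemma beta_mono: "r \<le> r' \<Longrightarrow> beta r \<le> beta r'"
  by (rule card_mono[OF ball_finite]) auto

definition pw :: "'a \<Rightarrow> 'a \<Rightarrow> bool list \<Rightarrow> 'a" where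
  "pw a b u = word_eval G (map (\<lambda>l. if l then b else a) u)"

lemma pw_Cons: "pw a b (x # u) = (if x then b else a) \<otimes> pw a b u"
  by (simp add: pw_def eval_Cons)

lemma pw_carrier: "a \<in> carrier G \<Longrightarrow> b \<in> carrier G \<Longrightarrow> pw a b u \<in> carrier G"
  unfolding pw_def by (rule eval_carrier) auto

lemma pw_len: assumes "a \<in> carrier G" "b \<in> carrier G"
  shows "len (pw a b u) \<le> length u * max (len a) (len b)"
proof (induction u)
  case Nil then show ?case by (simp add: pw_def eval_Nil len_one)
next
  case (Cons x u)
  have "len (pw a b (x # u)) \<le> len (if x then b else a) + len (pw a b u)"
    unfolding pw_Cons using assms pw_carrier by (intro len_mult) auto
  also have "len (if x then b else a) \<le> max (len a) (len b)" by auto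
  finally show ?case using Cons by simp
qed

lemma fp_eval: assumes ab: "a \<in> carrier G" "b \<in> carrier G"
  shows "word_eval G (map (letter_eval G a b) (map (\<lambda>l. (l, True)) (rev u) @ map (\<lambda>l. (l, False)) v))
     = inv (pw a b u) \<otimes> pw a b v"
proof -
  have e1: "map (letter_eval G a b) (map (\<lambda>l. (l, True)) (rev u)) = map (\<lambda>x. inv x) (rev (map (\<lambda>l. if l then b else a) u))"
    by (simp add: rev_map Let_def)
  have e2: "map (letter_eval G a b) (map (\<lambda>l. (l, False)) v) = map (\<lambda>l. if l then b else a) v"
    by (simp add: Let_def)
  have s1: "set (map (\<lambda>l. if l then b else a) u) \<subseteq> carrier G" using ab by auto
  have s2: "set (map (\<lambda>l. if l then b else a) v) \<subseteq> carrier G" using ab by auto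
  have s3: "set (map (\<lambda>x. inv x) (rev (map (\<lambda>l. if l then b else a) u))) \<subseteq> carrier G" using ab by auto
  show ?thesis unfolding map_append e1 e2 eval_append[OF s3 s2] eval_inv_word[OF s1] pw_def ..
qed

lemma pw_inj: assumes fp: "free_pair G a b"
  shows "length u = length v \<Longrightarrow> pw a b u = pw a b v \<Longrightarrow> u = v"
proof (induction u arbitrary: v)
  case Nil then show ?case by simp
next
  case (Cons x u)
  have ab: "a \<in> carrier G" "b \<in> carrier G" using fp by (auto simp: free_pair_def)
  obtain y v' where v: "v = y # v'" using Cons.prems by (cases v) auto
  show ?case
  proof (cases "x = y")
    case True
    have "(if x then b else a) \<otimes> pw a b u = (if x then b else a) \<otimes> pw a b v'"
      using Cons.prems v True by (simp add: pw_Cons)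
    then have "pw a b u = pw a b v'" using ab pw_carrier by (cases x) auto
    then show ?thesis using Cons.IH Cons.prems v True by simp
  next
    case False
    define w where "w = map (\<lambda>l. (l, True)) (rev (x # u)) @ map (\<lambda>l. (l, False)) (y # v')"
    have "w \<noteq> []" unfolding w_def by simp
    moreover have "reduced_word w" unfolding w_def using False by (intro red_mix) simp
    moreover have "word_eval G (map (letter_eval G a b) w) = \<one>"
      unfolding w_def fp_eval[OF ab] using Cons.prems v ab pw_carrier by simp
    ultimately show ?thesis using fp unfolding free_pair_def by blast
  qed
qed

lemma beta_exp: assumes fp: "free_pair G a b"
  shows "2 ^ n \<le> beta (n * max (len a) (len b))"
proof -
  have ab: "a \<in> carrier G" "b \<in> carrier G" using fp by (auto simp: free_pair_def)
  let ?U = "{u :: bool list. set u \<subseteq> UNIV \<and> length u = n}"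
  have c: "card ?U = 2 ^ n" using card_lists_length_eq[of "UNIV :: bool set" n] by simp
  have inj: "inj_on (pw a b) ?U" using pw_inj[OF fp] by (auto simp: inj_on_def)
  have "pw a b ` ?U \<subseteq> {g \<in> carrier G. len g \<le> n * max (len a) (len b)}"
    using pw_len[OF ab] pw_carrier[OF ab] by auto
  then have "card (pw a b ` ?U) \<le> beta (n * max (len a) (len b))"
    by (intro card_mono[OF ball_finite])
  then show ?thesis using card_image[OF inj] c by simp
qed

lemma growth: assumes fp: "free_pair G a b"
  shows "\<exists>s. \<forall>R0. \<exists>R\<ge>R0. 5 * beta (R - s) < beta R"
proof (rule ccontr)
  assume na: "\<not> (\<exists>s. \<forall>R0. \<exists>R\<ge>R0. 5 * beta (R - s) < beta R)"
  define s where "s = 4 * max (len a) (len b)"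
  then obtain R0 where R0: "\<And>R. R \<ge> R0 \<Longrightarrow> beta R \<le> 5 * beta (R - s)"
    using na by (auto simp: not_less)
  have it: "beta (R0 + j * s) \<le> 5 ^ j * beta R0" for j
  proof (induction j)
    case 0 then show ?case by simp
  next
    case (Suc j)
    have "beta (R0 + Suc j * s) \<le> 5 * beta (R0 + Suc j * s - s)" by (rule R0) simp
    also have "R0 + Suc j * s - s = R0 + j * s" by simp
    finally show ?case using Suc by simp
  qed
  define j where "j = beta R0"
  have "(16::nat) ^ j = 2 ^ (4 * j)" by (simp add: power_mult)
  also have "\<dots> \<le> beta ((4 * j) * max (len a) (len b))" by (rule beta_exp[OF fp])
  also have "\<dots> \<le> beta (R0 + j * s)" unfolding s_def by (intro beta_mono) simp
  also have "\<dots> \<le> 5 ^ j * j" using it[of j] unfolding j_def by simp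
  also have "\<dots> < 5 ^ j * 2 ^ j" by simp
  also have "\<dots> = 10 ^ j" by (simp add: power_mult_distrib[symmetric])
  also have "\<dots> \<le> 16 ^ j" by (intro power_mono) auto
  finally show False by simp
qed

lemma tball_card: assumes p: "p \<in> carrier G"
  shows "finite {x \<in> carrier G. dst p x \<le> r} \<and> card {x \<in> carrier G. dst p x \<le> r} \<le> beta r"
proof -
  have "{x \<in> carrier G. dst p x \<le> r} \<subseteq> (\<lambda>y. p \<otimes> y) ` {g \<in> carrier G. len g \<le> r}"
  proof
    fix x assume x: "x \<in> {x \<in> carrier G. dst p x \<le> r}"
    then have "x = p \<otimes> (inv p \<otimes> x)" using p by (simp add: m_assoc[symmetric])
    then show "x \<in> (\<lambda>y. p \<otimes> y) ` {g \<in> carrier G. len g \<le> r}" using x p by (auto simp: word_dist_def)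
  qed
  then show ?thesis using ball_finite finite_subset card_image_le surj_card_le order_trans
    by (meson card_mono finite_imageI)
qed

lemma tball_card_inv: assumes p: "p \<in> carrier G"
  shows "finite {x \<in> carrier G. dst p (inv x) \<le> r} \<and> card {x \<in> carrier G. dst p (inv x) \<le> r} \<le> beta r"
proof -
  have "{x \<in> carrier G. dst p (inv x) \<le> r} \<subseteq> (\<lambda>y. inv (p \<otimes> y)) ` {g \<in> carrier G. len g \<le> r}"
  proof
    fix x assume x: "x \<in> {x \<in> carrier G. dst p (inv x) \<le> r}"
    then have "x = inv (p \<otimes> (inv p \<otimes> inv x))" using p by (simp add: m_assoc[symmetric])
    then show "x \<in> (\<lambda>y. inv (p \<otimes> y)) ` {g \<in> carrier G. len g \<le> r}" using x p by (auto simp: word_dist_def)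
  qed
  then show ?thesis using ball_finite finite_subset card_image_le surj_card_le order_trans
    by (meson card_mono finite_imageI)
qed

end


context hgroup
begin

lemma near: assumes z: "z \<in> carrier G" and t: "t \<le> len z"
  shows "\<exists>p\<in>carrier G. \<forall>x\<in>carrier G. gp \<one> x z \<ge> real t \<longrightarrow> real (dst p x) \<le> real (len x) - real t + 2*\<delta>"
proof -
  obtain p where p: "p \<in> carrier G" "len p = t" "len (inv p \<otimes> z) = len z - t" using geo_point[OF z t] by blast
  have dpz: "dst p z = len z - t" using p by (simp add: word_dist_def)
  have gzp: "gp \<one> p z = real t" using p z dpz t by (simp add: gp_one)
  show ?thesis
  proof (intro bexI[OF _ p(1)] ballI impI)
    fix x assume x: "x \<in> carrier G" and ge: "gp \<one> x z \<ge> real t"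
    have "gp \<one> x p \<ge> min (gp \<one> x z) (gp \<one> p z) - \<delta>" using four x p z by blast
    then have "gp \<one> x p \<ge> real t - \<delta>" using ge gzp by linarith
    then show "real (dst p x) \<le> real (len x) - real t + 2*\<delta>"
      using x p dst_sym[OF x p(1)] by (simp add: gp_one)
  qed
qed

lemma select: assumes fp: "free_pair G a b"
  shows "\<exists>(t::nat) (R::nat). \<forall>g\<in>carrier G. real (len g) > 2 * real t + 2*\<delta> \<longrightarrow>
    (\<exists>h\<in>carrier G. len h \<le> R \<and> real (transl_length G S (commutator G g h)) \<ge> 2 * real (len g) - 8 * real t - 8*\<delta> - 1)"
proof -
  obtain s where s: "\<And>R0. \<exists>R\<ge>R0. 5 * beta (R - s) < beta R" using growth[OF fp] by blast
  define D where "D = nat \<lceil>2*\<delta>\<rceil>"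
  have D: "real D \<ge> 2*\<delta>" unfolding D_def by linarith
  define t where "t = s + D"
  obtain R where R: "R \<ge> 3 * t" "5 * beta (R - s) < beta R" using s by blast
  define r where "r = R - s"
  have "s \<le> R" using R(1) unfolding t_def by simp
  then have rR: "real r = real R - real t + real D" unfolding r_def t_def by (simp add: of_nat_diff)
  have tr: "2 * t + D \<le> r" using R(1) unfolding r_def t_def by simp
  show ?thesis
  proof (intro exI ballI impI)
    fix g assume g: "g \<in> carrier G" and lg: "real (len g) > 2 * real t + 2*\<delta>"
    have gi: "inv g \<in> carrier G" using g by simp
    have lgi: "len (inv g) = len g" using len_inv g by simp
    have tg: "t \<le> len g" using lg dpos by linarith
    obtain p1 where p1: "p1 \<in> carrier G" "\<forall>x\<in>carrier G. gp \<one> x g \<ge> real t \<longrightarrow> real (dst p1 x) \<le> real (len x) - real t + 2*\<delta>"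
      using near[OF g tg] by blast
    obtain p2 where p2: "p2 \<in> carrier G" "\<forall>x\<in>carrier G. gp \<one> x (inv g) \<ge> real t \<longrightarrow> real (dst p2 x) \<le> real (len x) - real t + 2*\<delta>"
      using near[OF gi] tg lgi by auto
    define B1 where "B1 = {x \<in> carrier G. dst p1 x \<le> r}"
    define B2 where "B2 = {x \<in> carrier G. dst p2 x \<le> r}"
    define B3 where "B3 = {x \<in> carrier G. dst p1 (inv x) \<le> r}"
    define B4 where "B4 = {x \<in> carrier G. dst p2 (inv x) \<le> r}"
    have b1: "finite B1" "card B1 \<le> beta r" unfolding B1_def using tball_card[OF p1(1)] by auto
    have b2: "finite B2" "card B2 \<le> beta r" unfolding B2_def using tball_card[OF p2(1)] by auto
    have b3: "finite B3" "card B3 \<le> beta r" unfolding B3_def using tball_card_inv[OF p1(1)] by auto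
    have b4: "finite B4" "card B4 \<le> beta r" unfolding B4_def using tball_card_inv[OF p2(1)] by auto
    define Bad where "Bad = B1 \<union> B2 \<union> B3 \<union> B4"
    have fB: "finite Bad" unfolding Bad_def using b1 b2 b3 b4 by simp
    have "card Bad \<le> card B1 + card B2 + card B3 + card B4" unfolding Bad_def
      by (meson add_mono_thms_linordered_semiring(3) card_Un_le order_trans)
    then have cB: "card Bad \<le> 4 * beta r" using b1 b2 b3 b4 by linarith
    define A where "A = {h \<in> carrier G. len h \<le> R} - {h \<in> carrier G. len h \<le> 2 * t + D}"
    have "card A = beta R - beta (2 * t + D)" unfolding A_def
      by (rule card_Diff_subset) (use ball_finite tr r_def in auto)
    moreover have "beta (2 * t + D) \<le> beta r" using tr by (rule beta_mono)
    ultimately have "card A > card Bad" using cB R(2) unfolding r_def by linarith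
    then have "\<not> A \<subseteq> Bad" using card_mono[OF fB] by (meson not_le)
    then obtain h where hA: "h \<in> A" and hB: "h \<notin> Bad" by blast
    have h: "h \<in> carrier G" "len h \<le> R" "len h > 2 * t + D" using hA unfolding A_def by auto
    have hi: "inv h \<in> carrier G" "len (inv h) = len h" using h len_inv by auto
    have key: "gp \<one> x z < real t" if x: "x \<in> carrier G" and lx: "len x \<le> R" and pc: "p \<in> carrier G"
      and pp: "\<forall>y\<in>carrier G. gp \<one> y z \<ge> real t \<longrightarrow> real (dst p y) \<le> real (len y) - real t + 2*\<delta>"
      and far: "\<not> dst p x \<le> r" for x z p
    proof (rule ccontr)
      assume "\<not> gp \<one> x z < real t"
      then have "real (dst p x) \<le> real (len x) - real t + 2*\<delta>" using pp x by auto
      also have "\<dots> \<le> real r" using rR lx D by simp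
      finally show False using far by simp
    qed
    have k1: "gp \<one> h g < real t" using key[OF h(1) h(2) p1(1) p1(2)] hB h unfolding Bad_def B1_def by auto
    have k2: "gp \<one> h (inv g) < real t" using key[OF h(1) h(2) p2(1) p2(2)] hB h unfolding Bad_def B2_def by auto
    have k3: "gp \<one> (inv h) g < real t" using key[OF hi(1) _ p1(1) p1(2)] hB h hi unfolding Bad_def B3_def by auto
    have k4: "gp \<one> (inv h) (inv g) < real t" using key[OF hi(1) _ p2(1) p2(2)] hB h hi unfolding Bad_def B4_def by auto
    have lh: "real (len h) > 2 * real t + 2*\<delta>" using h(3) D by linarith
    have "real (transl_length G S (commutator G g h)) \<ge> 2 * real (len g) - 8 * real t - 8*\<delta> - 1"
    proof (rule comm_lower[OF g h(1)])
      show "0 \<le> real t" by simp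
      show "gp \<one> (inv g) h \<le> real t" using k2 gp_sym[OF h(1) gi] by simp
      show "gp \<one> (inv h) (inv g) \<le> real t" using k4 by simp
      show "gp \<one> g (inv h) \<le> real t" using k3 gp_sym[OF hi(1) g] by simp
      show "gp \<one> h g \<le> real t" using k1 by simp
      show "2 * real t + 2 * \<delta> < real (len g)" using lg by simp
      show "2 * real t + 2 * \<delta> < real (len h)" using lh by simp
    qed
    then show "\<exists>h\<in>carrier G. len h \<le> R \<and> real (transl_length G S (commutator G g h)) \<ge> 2 * real (len g) - 8 * real t - 8*\<delta> - 1"
      using h by blast
  qed
qed

end


theorem mainTheorem17:
  fixes G :: "('a, 'b) monoid_scheme" and S :: "'a set" and \<gamma> :: "nat \<Rightarrow> 'a"
  assumes "group G"
    and "finite S" and "S \<subseteq> carrier G" and "generate G S = carrier G"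
    and "hyperbolic_group G S"
    and "non_elementary G"
    and "\<And>n. \<gamma> n \<in> carrier G" and "inj \<gamma>"
  shows "\<exists>h\<in>carrier G. \<not> (\<exists>B. \<forall>n. transl_length G S (commutator G (\<gamma> n) h) \<le> B)"
proof -
  obtain \<delta> :: real where d0: "\<delta> \<ge> 0" and d4: "\<forall>w\<in>carrier G. \<forall>x\<in>carrier G. \<forall>y\<in>carrier G. \<forall>z\<in>carrier G.
        gromov_product G S w x y \<ge> min (gromov_product G S w x z) (gromov_product G S w y z) - \<delta>"
    using assms(5) unfolding hyperbolic_group_def by blast
  have wg: "wgroup G S" using assms(1-4) by (simp add: wgroup_def wgroup_axioms_def)
  interpret hgroup G S \<delta>
  proof (rule hgroup.intro[OF wg])
    show "hgroup_axioms G S \<delta>"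
    proof
      show "0 \<le> \<delta>" by (rule d0)
      fix w x y z assume "w \<in> carrier G" "x \<in> carrier G" "y \<in> carrier G" "z \<in> carrier G"
      then show "min (gromov_product G S w x z) (gromov_product G S w y z) - \<delta> \<le> gromov_product G S w x y"
        using d4 by simp
    qed
  qed
  obtain a b where fp: "free_pair G a b" using assms(6) unfolding non_elementary_def by blast
  obtain t R where tR: "\<forall>g\<in>carrier G. real (len g) > 2 * real t + 2*\<delta> \<longrightarrow>
    (\<exists>h\<in>carrier G. len h \<le> R \<and> real (transl_length G S (commutator G g h)) \<ge> 2 * real (len g) - 8 * real t - 8*\<delta> - 1)"
    using select[OF fp] by blast
  show ?thesis
  proof (rule ccontr)
    assume "\<not> ?thesis"
    then have "\<forall>h\<in>carrier G. \<exists>B. \<forall>n. transl_length G S (commutator G (\<gamma> n) h) \<le> B" by blast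
    then have "\<exists>Bf. \<forall>h\<in>carrier G. \<forall>n. transl_length G S (commutator G (\<gamma> n) h) \<le> Bf h"
      by (rule bchoice)
    then obtain Bf where Bf0: "\<forall>h\<in>carrier G. \<forall>n. transl_length G S (commutator G (\<gamma> n) h) \<le> Bf h"
      by blast
    have Bf: "\<And>h n. h \<in> carrier G \<Longrightarrow> transl_length G S (commutator G (\<gamma> n) h) \<le> Bf h"
      using Bf0 by blast
    define BR where "BR = {h \<in> carrier G. len h \<le> R}"
    have fBR: "finite BR" unfolding BR_def by (rule ball_finite)
    define M where "M = Max (Bf ` BR)"
    have M: "Bf h \<le> M" if "h \<in> BR" for h
      unfolding M_def using fBR that by (intro Max_ge) auto
    define N where "N = max (2 * real t + 2*\<delta>) ((real M + 8 * real t + 8*\<delta> + 1) / 2)"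
    have bound: "real (len (\<gamma> n)) \<le> N" for n
    proof (cases "real (len (\<gamma> n)) > 2 * real t + 2*\<delta>")
      case True
      then obtain h where h: "h \<in> carrier G" "len h \<le> R"
        "real (transl_length G S (commutator G (\<gamma> n) h)) \<ge> 2 * real (len (\<gamma> n)) - 8 * real t - 8*\<delta> - 1"
        using tR assms(7) by blast
      have "transl_length G S (commutator G (\<gamma> n) h) \<le> M"
      proof -
        have "h \<in> BR" unfolding BR_def using h by simp
        then show ?thesis using Bf[OF h(1), of n] M[of h] by simp
      qed
      then have "real (transl_length G S (commutator G (\<gamma> n) h)) \<le> real M" by simp
      then have "2 * real (len (\<gamma> n)) \<le> real M + 8 * real t + 8*\<delta> + 1" using h(3) by linarith
      then have "real (len (\<gamma> n)) \<le> (real M + 8 * real t + 8*\<delta> + 1) / 2" by simp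
      then show ?thesis unfolding N_def by (rule max.coboundedI2)
    next
      case False
      then have "real (len (\<gamma> n)) \<le> 2 * real t + 2*\<delta>" by linarith
      then show ?thesis unfolding N_def by (rule max.coboundedI1)
    qed
    have "range \<gamma> \<subseteq> {g \<in> carrier G. len g \<le> nat \<lceil>N\<rceil>}"
    proof
      fix x assume "x \<in> range \<gamma>"
      then obtain n where n: "x = \<gamma> n" by blast
      have "real (len (\<gamma> n)) \<le> real (nat \<lceil>N\<rceil>)" using bound[of n] by linarith
      then show "x \<in> {g \<in> carrier G. len g \<le> nat \<lceil>N\<rceil>}" using n assms(7) by simp
    qed
    then have "finite (range \<gamma>)" using ball_finite finite_subset by blast
    then have "finite (UNIV :: nat set)" using finite_imageD[of \<gamma> UNIV] assms(8) by simp
    then show False by simp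
  qed
qed


end
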